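(* VD and BC satisfy ballot monotonicity. For each $f\in\{\mathrm{MF},\mathrm{MS},\mathrm{FT}\}$ ballot monotonicity fails: there exist a finite candidate set $C$, a profile $P$, an axis $\triangleleft\in f(P)$ and a ballot $A\in P$ that is not an interval of $\triangleleft$ such that $\triangleleft\notin f(P')$, where $P'$ is obtained from $P$ by replacing (one copy of) $A$ with $A'=\{x\in C:\exists y,z\in A,\ y\trianglelefteq x\trianglelefteq z\}$.
   Context: Let $C$ be a finite set of candidates. An approval ballot is a nonempty subset $A\subseteq C$; a profile is a finite sequence of ballots. An axis is a strict linear order $\triangleleft$ on $C$; $a\trianglelefteq b$ means $a\triangleleft b$ or $a=b$. A ballot $A$ is an interval of $\triangleleft$ if for all $a,b\in A$ and every $c$ with $a\triangleleft c\triangleleft b$ we have $c\in A$. An axis rule $f$ satisfies ballot monotonicity if for every profile $P$, every ballot $A\in P$ and every axis $\triangleleft\in f(P)$ such that $A$ is not an interval of $\triangleleft$, we have $\triangleleft\in f(P')$, where $P'$ is obtained from $P$ by replacing $A$ by $A'=\{x\in C:\exists y,z\in A \text{ with } y\trianglelefteq x\trianglelefteq z\}$. For a cost function $\mathrm{cost}_f$, the scoring rule returns $f(P)=\arg\min_{\triangleleft}\sum_{A\in P}\mathrm{cost}_f(A,\triangleleft)$ over all axes on $C$. The five rules are the scoring rules with costs: $\mathrm{cost}_{\mathrm{VD}}(A,\triangleleft)=0$ if $A$ is an interval of $\triangleleft$ and $1$ otherwise; $\mathrm{cost}_{\mathrm{MF}}(A,\triangleleft)=\min_{x,y\in A,\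 x\trianglelefteq y}\big(|\{z\in A: z\triangleleft x \text{ or } y\triangleleft z\}|+|\{z\notin A: x\triangleleft z\triangleleft y\}|\big)$; $\mathrm{cost}_{\mathrm{BC}}(A,\triangleleft)=|\{b\notin A: a\triangleleft b\triangleleft c \text{ for some } a,c\in A\}|$; $\mathrm{cost}_{\mathrm{MS}}(A,\triangleleft)=\sum_{x\in C\setminus A}\min\big(|\{y\in A:y\triangleleft x\}|,\,|\{y\in A:x\triangleleft y\}|\big)$; $\mathrm{cost}_{\mathrm{FT}}(A,\triangleleft)=\sum_{x\in C\setminus A}|\{y\in A:y\triangleleft x\}|\cdot|\{y\in A:x\triangleleft y\}|$. *)

theory Defs
  imports Main
begin

definition is_axis :: "'a set \<Rightarrow> 'a rel \<Rightarrow> bool" where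
  "is_axis C r \<longleftrightarrow> r \<subseteq> C \<times> C \<and> strict_linear_order_on C r"

definition axes :: "'a set \<Rightarrow> 'a rel set" where
  "axes C = {r. is_axis C r}"

definition axle :: "'a rel \<Rightarrow> 'a \<Rightarrow> 'a \<Rightarrow> bool" where
  "axle r a b \<longleftrightarrow> (a, b) \<in> r \<or> a = b"

definition is_interval :: "'a rel \<Rightarrow> 'a set \<Rightarrow> bool" where
  "is_interval r A \<longleftrightarrow> (\<forall>a\<in>A. \<forall>b\<in>A. \<forall>c. (a, c) \<in> r \<and> (c, b) \<in> r \<longrightarrow> c \<in> A)"

definition interval_hull :: "'a set \<Rightarrow> 'a rel \<Rightarrow> 'a set \<Rightarrow> 'a set" where
  "interval_hull C r A = {x \<in> C. \<exists>y\<in>A. \<exists>z\<in>A. axle r y x \<and> axle r x z}"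

definition is_profile :: "'a set \<Rightarrow> 'a set list \<Rightarrow> bool" where
  "is_profile C P \<longleftrightarrow> (\<forall>A\<in>set P. A \<noteq> {} \<and> A \<subseteq> C)"

type_synonym 'a cost = "'a set \<Rightarrow> 'a set \<Rightarrow> 'a rel \<Rightarrow> nat"  (* C, ballot A, axis *)
type_synonym 'a axis_rule = "'a set \<Rightarrow> 'a set list \<Rightarrow> 'a rel set"

definition total_cost :: "'a cost \<Rightarrow> 'a set \<Rightarrow> 'a set list \<Rightarrow> 'a rel \<Rightarrow> nat" where
  "total_cost c C P r = sum_list (map (\<lambda>A. c C A r) P)"

definition scoring_rule :: "'a cost \<Rightarrow> 'a axis_rule" where
  "scoring_rule c C P = {r \<in> axes C. \<forall>r'\<in>axes C. total_cost c C P r \<le> total_cost c C P r'}"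

definition cost_VD :: "'a cost" where
  "cost_VD C A r = (if is_interval r A then 0 else 1)"

definition cost_MF :: "'a cost" where
  "cost_MF C A r = Min ((\<lambda>(x, y). card {z \<in> A. (z, x) \<in> r \<or> (y, z) \<in> r}
                                  + card {z \<in> C - A. (x, z) \<in> r \<and> (z, y) \<in> r})
                        ` {(x, y). x \<in> A \<and> y \<in> A \<and> axle r x y})"

definition cost_BC :: "'a cost" where
  "cost_BC C A r = card {b \<in> C - A. \<exists>a\<in>A. \<exists>c\<in>A. (a, b) \<in> r \<and> (b, c) \<in> r}"

definition cost_MS :: "'a cost" where
  "cost_MS C A r = (\<Sum>x\<in>C - A. min (card {y \<in> A. (y, x) \<in> r}) (card {y \<in> A. (x, y) \<in> r}))"

definition cost_FT :: "'a cost" where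
  "cost_FT C A r = (\<Sum>x\<in>C - A. card {y \<in> A. (y, x) \<in> r} * card {y \<in> A. (x, y) \<in> r})"

definition ballot_monotone :: "'a axis_rule \<Rightarrow> bool" where
  "ballot_monotone f \<longleftrightarrow>
     (\<forall>C P i r. finite C \<and> is_profile C P \<and> i < length P \<and> r \<in> f C P \<and> \<not> is_interval r (P ! i)
        \<longrightarrow> r \<in> f C (P[i := interval_hull C r (P ! i)]))"

end

theory Submission imports Defs "HOL-Combinatorics.Multiset_Permutations" begin

lemma total_cost_upd:
  "i < length P \<Longrightarrow> total_cost c C (P[i := X]) r + c C (P ! i) r = total_cost c C P r + c C X r"
proof (induction P arbitrary: i)
  case Nil then show ?case by simp
next
  case (Cons a P) then show ?case by (cases i) (auto simp: total_cost_def)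
qed

lemma mono_crit:
  assumes H: "\<And>C P i r r'. finite C \<Longrightarrow> is_profile C P \<Longrightarrow> i < length P \<Longrightarrow> r \<in> axes C
     \<Longrightarrow> \<not> is_interval r (P!i) \<Longrightarrow> r' \<in> axes C \<Longrightarrow>
     c C (interval_hull C r (P!i)) r = 0 \<and>
     c C (P!i) r' \<le> c C (interval_hull C r (P!i)) r' + c C (P!i) r"
  shows "ballot_monotone (scoring_rule c)"
  unfolding ballot_monotone_def
proof (intro allI impI)
  fix C P i r
  assume a: "finite C \<and> is_profile C P \<and> i < length P \<and> r \<in> scoring_rule c C P \<and> \<not> is_interval r (P ! i)"
  let ?H = "interval_hull C r (P!i)"
  have rax: "r \<in> axes C" and opt: "\<And>r'. r' \<in> axes C \<Longrightarrow> total_cost c C P r \<le> total_cost c C P r'"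
    using a by (auto simp: scoring_rule_def)
  show "r \<in> scoring_rule c C (P[i := ?H])"
    unfolding scoring_rule_def
  proof (intro CollectI conjI ballI rax)
    fix r' assume r': "r' \<in> axes C"
    have h: "c C ?H r = 0 \<and> c C (P!i) r' \<le> c C ?H r' + c C (P!i) r"
      using H[of C P i r r'] a rax r' by blast
    have e1: "total_cost c C (P[i := ?H]) r + c C (P ! i) r = total_cost c C P r + c C ?H r"
      using a total_cost_upd by blast
    have e2: "total_cost c C (P[i := ?H]) r' + c C (P ! i) r' = total_cost c C P r' + c C ?H r'"
      using a total_cost_upd by blast
    show "total_cost c C (P[i := ?H]) r \<le> total_cost c C (P[i := ?H]) r'"
      using e1 e2 h opt[OF r'] by linarith
  qed
qed

lemma axis_props:
  assumes "r \<in> axes C"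
  shows "r \<subseteq> C \<times> C" "trans r" "irrefl r" "total_on C r"
  using assms by (auto simp: axes_def is_axis_def strict_linear_order_on_def)

lemma hull_interval:
  assumes "r \<in> axes C"
  shows "is_interval r (interval_hull C r A)"
proof -
  note p = axis_props[OF assms]
  show ?thesis unfolding is_interval_def interval_hull_def
  proof (intro ballI allI impI)
    fix a b c
    assume am: "a \<in> {x \<in> C. \<exists>y\<in>A. \<exists>z\<in>A. axle r y x \<and> axle r x z}"
      and bm: "b \<in> {x \<in> C. \<exists>y\<in>A. \<exists>z\<in>A. axle r y x \<and> axle r x z}"
      and c: "(a, c) \<in> r \<and> (c, b) \<in> r"
    from am obtain y where y: "y \<in> A" "axle r y a" by blast
    from bm obtain z where z: "z \<in> A" "axle r b z" by blast
    have "axle r y c" using y c p(2) unfolding axle_def trans_def by blast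
    moreover have "axle r c z" using z c p(2) unfolding axle_def trans_def by blast
    moreover have "c \<in> C" using c p(1) by blast
    ultimately show "c \<in> {x \<in> C. \<exists>y\<in>A. \<exists>z\<in>A. axle r y x \<and> axle r x z}"
      using y z by blast
  qed
qed

lemma VD_mono: "ballot_monotone (scoring_rule cost_VD)"
  apply (rule mono_crit)
  using hull_interval by (simp add: cost_VD_def)

lemma BC_mono: "ballot_monotone (scoring_rule cost_BC)"
proof (rule mono_crit)
  fix C P i r r'
  assume fin: "finite C" and prof: "is_profile C P" and i: "i < length P" and rax: "r \<in> axes C"
    and r': "r' \<in> axes C"
  let ?A = "P ! i"
  let ?H = "interval_hull C r ?A"
  have AC: "?A \<subseteq> C" using prof i by (auto simp: is_profile_def)
  have AH: "?A \<subseteq> ?H" using AC by (auto simp: interval_hull_def axle_def)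
  have HC: "?H \<subseteq> C" by (auto simp: interval_hull_def)
  have finH: "finite ?H" using fin HC finite_subset by blast
  have int: "is_interval r ?H" using hull_interval[OF rax] .
  have z: "cost_BC C ?H r = 0"
  proof -
    have "{b \<in> C - ?H. \<exists>a\<in>?H. \<exists>c\<in>?H. (a, b) \<in> r \<and> (b, c) \<in> r} = {}"
      using int unfolding is_interval_def by blast
    then show ?thesis by (simp only: cost_BC_def card.empty)
  qed
  let ?G = "\<lambda>X s. {b \<in> C - X. \<exists>a\<in>X. \<exists>c\<in>X. (a, b) \<in> s \<and> (b, c) \<in> s}"
  have s1: "?G ?A r' \<subseteq> ?G ?H r' \<union> (?H - ?A)" using AH by blast
  have s2: "?H - ?A \<subseteq> ?G ?A r"
    by (auto simp: interval_hull_def axle_def)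
  have "card (?G ?A r') \<le> card (?G ?H r' \<union> (?H - ?A))"
    by (rule card_mono) (use fin s1 finH in auto)
  also have "\<dots> \<le> card (?G ?H r') + card (?H - ?A)" by (rule card_Un_le)
  also have "card (?H - ?A) \<le> card (?G ?A r)"
    by (rule card_mono) (use fin s2 in auto)
  finally show "cost_BC C ?H r = 0 \<and> cost_BC C ?A r' \<le> cost_BC C ?H r' + cost_BC C ?A r"
    using z by (simp add: cost_BC_def)
qed

definition rel_of :: "'a list \<Rightarrow> 'a rel" where
 "rel_of xs = set (concat (map (\<lambda>i. map (\<lambda>j. (xs!i, xs!j)) [Suc i..<length xs]) [0..<length xs]))"

lemma rel_of_iff: "(a, b) \<in> rel_of xs \<longleftrightarrow> (\<exists>i j. i < j \<and> j < length xs \<and> a = xs!i \<and> b = xs!j)"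
proof
  assume "(a, b) \<in> rel_of xs"
  then show "\<exists>i j. i < j \<and> j < length xs \<and> a = xs!i \<and> b = xs!j"
    unfolding rel_of_def by (auto simp: Suc_le_eq) blast
next
  assume "\<exists>i j. i < j \<and> j < length xs \<and> a = xs!i \<and> b = xs!j"
  then obtain i j where "i < j" "j < length xs" "a = xs!i" "b = xs!j" by blast
  then show "(a, b) \<in> rel_of xs"
    unfolding rel_of_def by (auto simp: Suc_le_eq intro!: bexI[of _ i] image_eqI[of _ _ j])
qed

lemma rel_of_axis:
  assumes "distinct xs"
  shows "rel_of xs \<in> axes (set xs)"
proof -
  have sub: "rel_of xs \<subseteq> set xs \<times> set xs" by (auto simp: rel_of_iff)
  have tr: "trans (rel_of xs)"
    unfolding trans_def rel_of_iff
    using assms by (metis nth_eq_iff_index_eq order.strict_trans)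
  have ir: "irrefl (rel_of xs)"
    unfolding irrefl_def rel_of_iff using assms
    by (metis less_imp_neq nth_eq_iff_index_eq order.strict_trans)
  have to: "total_on (set xs) (rel_of xs)"
    unfolding total_on_def rel_of_iff
    by (metis in_set_conv_nth linorder_neqE_nat)
  show ?thesis using sub tr ir to
    by (simp add: axes_def is_axis_def strict_linear_order_on_def)
qed

lemma sorted_exists:
  assumes "finite C" "trans r" "irrefl r" "total_on C r"
  shows "\<exists>xs. set xs = C \<and> distinct xs \<and> sorted_wrt (\<lambda>a b. (a, b) \<in> r) xs"
  using assms
proof (induction C rule: finite_induct)
  case empty then show ?case by simp
next
  case (insert x F)
  have tF: "total_on F r" using insert.prems(3) by (auto simp: total_on_def)
  obtain ys where ys: "set ys = F" "distinct ys" "sorted_wrt (\<lambda>a b. (a, b) \<in> r) ys"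
    using insert.IH[OF insert.prems(1,2) tF] by blast
  have xx: "(x, x) \<notin> r" using insert.prems(2) by (auto simp: irrefl_def)
  define L where "L = filter (\<lambda>y. (y, x) \<in> r) ys"
  define R where "R = filter (\<lambda>y. (x, y) \<in> r) ys"
  have tot: "\<And>y. y \<in> F \<Longrightarrow> (y, x) \<in> r \<or> (x, y) \<in> r"
    using insert.prems(3) insert.hyps(2) by (auto simp: total_on_def)
  have asym: "\<And>y. (y, x) \<in> r \<Longrightarrow> (x, y) \<in> r \<Longrightarrow> False"
    using insert.prems(1,2) by (meson irrefl_def transD)
  have "set (L @ x # R) = insert x F" using ys tot by (auto simp: L_def R_def)
  moreover have "distinct (L @ x # R)" using ys xx asym by (auto simp: L_def R_def)
  moreover have "sorted_wrt (\<lambda>a b. (a, b) \<in> r) (L @ x # R)"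
    using ys(3) insert.prems(1)
    by (auto simp: L_def R_def sorted_wrt_append sorted_wrt_filter intro: transD[OF insert.prems(1)])
  ultimately show ?case by blast
qed

lemma axis_rel_of:
  assumes "finite C" "r \<in> axes C"
  shows "\<exists>xs\<in>permutations_of_set C. r = rel_of xs"
proof -
  note p = axis_props[OF assms(2)]
  obtain xs where xs: "set xs = C" "distinct xs" "sorted_wrt (\<lambda>a b. (a, b) \<in> r) xs"
    using sorted_exists[OF assms(1) p(2,3,4)] by blast
  have "r = rel_of xs"
  proof
    show "rel_of xs \<subseteq> r" using xs(3) by (auto simp: rel_of_iff sorted_wrt_iff_nth_less)
  next
    show "r \<subseteq> rel_of xs"
    proof
      fix p assume pr: "p \<in> r"
      obtain a b where ab: "p = (a, b)" by (cases p)
      have "a \<in> set xs" "b \<in> set xs" using pr ab p(1) xs(1) by auto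
      then obtain i j where ij: "i < length xs" "j < length xs" "a = xs!i" "b = xs!j"
        by (metis in_set_conv_nth)
      have "i < j"
      proof (rule ccontr)
        assume "\<not> i < j"
        then consider "i = j" | "j < i" by linarith
        then show False
        proof cases
          case 1 then show False using pr ab ij p(3) by (auto simp: irrefl_def)
        next
          case 2
          then have "(b, a) \<in> r" using xs(3) ij by (auto simp: sorted_wrt_iff_nth_less)
          then show False using pr ab p(2,3) by (meson irrefl_def transD)
        qed
      qed
      then show "p \<in> rel_of xs" using ab ij by (auto simp: rel_of_iff)
    qed
  qed
  then show ?thesis using xs by (auto intro: permutations_of_setI)
qed

lemma nonmono_crit:
  assumes "finite C" "is_profile C P" "i < length P" "distinct xs" "set xs = C"
    "\<not> is_interval (rel_of xs) (P!i)"
    "\<forall>ys\<in>permutations_of_set C. total_cost c C P (rel_of xs) \<le> total_cost c C P (rel_of ys)"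
    "distinct zs" "set zs = C"
    "total_cost c C (P[i := interval_hull C (rel_of xs) (P!i)]) (rel_of zs)
      < total_cost c C (P[i := interval_hull C (rel_of xs) (P!i)]) (rel_of xs)"
  shows "\<not> ballot_monotone (scoring_rule c)"
proof
  assume m: "ballot_monotone (scoring_rule c)"
  have ax: "rel_of xs \<in> axes C" using rel_of_axis[OF assms(4)] assms(5) by simp
  have az: "rel_of zs \<in> axes C" using rel_of_axis[OF assms(8)] assms(9) by simp
  have "rel_of xs \<in> scoring_rule c C P"
    unfolding scoring_rule_def
  proof (intro CollectI conjI ballI ax)
    fix r' assume "r' \<in> axes C"
    then obtain ys where "ys \<in> permutations_of_set C" "r' = rel_of ys"
      using axis_rel_of[OF assms(1)] by blast
    then show "total_cost c C P (rel_of xs) \<le> total_cost c C P r'" using assms(7) by blast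
  qed
  then have "rel_of xs \<in> scoring_rule c C (P[i := interval_hull C (rel_of xs) (P!i)])"
    using m assms(1,2,3,6) unfolding ballot_monotone_def by blast
  then show False using az assms(10) unfolding scoring_rule_def by force
qed

lemma niw: "a \<in> A \<Longrightarrow> b \<in> A \<Longrightarrow> c \<notin> A \<Longrightarrow> (a, c) \<in> r \<Longrightarrow> (c, b) \<in> r \<Longrightarrow> \<not> is_interval r A"
  unfolding is_interval_def by blast

lemma cost_MF_alt: "cost_MF = (\<lambda>C A r. Min ((\<lambda>(x, y). card {z \<in> A. (z, x) \<in> r \<or> (y, z) \<in> r}
                                  + card {z \<in> C - A. (x, z) \<in> r \<and> (z, y) \<in> r})
                        ` Set.filter (\<lambda>(x, y). axle r x y) (A \<times> A)))"
  unfolding cost_MF_def Set.filter_eq by (intro ext arg_cong[where f=Min] image_cong) auto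


lemma MF_nonmono: "\<not> ballot_monotone (scoring_rule (cost_MF :: nat cost))"
proof (rule nonmono_crit[where C="{0..4}" and P="[{0,1},{2,3},{0,2,4},{1,3,4::nat}]" and i=2
      and xs="[0,1,3,2,4]" and zs="[0,1,4,3,2]"])
  show "\<not> is_interval (rel_of [0,1,3,2,4]) ([{0,1},{2,3},{0,2,4},{1,3,4::nat}] ! 2)"
    by (rule niw[where a=0 and b=2 and c=1]; code_simp)
  show "\<forall>ys\<in>permutations_of_set {0..4}. total_cost cost_MF {0..4} [{0,1},{2,3},{0,2,4},{1,3,4::nat}] (rel_of [0,1,3,2,4])
     \<le> total_cost cost_MF {0..4} [{0,1},{2,3},{0,2,4},{1,3,4::nat}] (rel_of ys)"
    unfolding cost_MF_alt by code_simp
  show "total_cost cost_MF {0..4} ([{0,1},{2,3},{0,2,4},{1,3,4::nat}][2 := interval_hull {0..4} (rel_of [0,1,3,2,4]) ([{0,1},{2,3},{0,2,4},{1,3,4::nat}]!2)]) (rel_of [0,1,4,3,2])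
    < total_cost cost_MF {0..4} ([{0,1},{2,3},{0,2,4},{1,3,4::nat}][2 := interval_hull {0..4} (rel_of [0,1,3,2,4]) ([{0,1},{2,3},{0,2,4},{1,3,4::nat}]!2)]) (rel_of [0,1,3,2,4])"
    unfolding cost_MF_alt by code_simp
qed (auto simp: is_profile_def)

lemma FT_nonmono: "\<not> ballot_monotone (scoring_rule (cost_FT :: nat cost))"
proof (rule nonmono_crit[where C="{0..4}" and P="[{0,1},{0,2},{0,3,4},{1,2,3,4::nat}]" and i=3
      and xs="[1,0,2,3,4]" and zs="[1,2,0,3,4]"])
  show "\<not> is_interval (rel_of [1,0,2,3,4]) ([{0,1},{0,2},{0,3,4},{1,2,3,4::nat}] ! 3)"
    by (rule niw[where a=1 and b=2 and c=0]; code_simp)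
  show "\<forall>ys\<in>permutations_of_set {0..4}. total_cost cost_FT {0..4} [{0,1},{0,2},{0,3,4},{1,2,3,4::nat}] (rel_of [1,0,2,3,4])
     \<le> total_cost cost_FT {0..4} [{0,1},{0,2},{0,3,4},{1,2,3,4::nat}] (rel_of ys)"
    by code_simp
  show "total_cost cost_FT {0..4} ([{0,1},{0,2},{0,3,4},{1,2,3,4::nat}][3 := interval_hull {0..4} (rel_of [1,0,2,3,4]) ([{0,1},{0,2},{0,3,4},{1,2,3,4::nat}]!3)]) (rel_of [1,2,0,3,4])
    < total_cost cost_FT {0..4} ([{0,1},{0,2},{0,3,4},{1,2,3,4::nat}][3 := interval_hull {0..4} (rel_of [1,0,2,3,4]) ([{0,1},{0,2},{0,3,4},{1,2,3,4::nat}]!3)]) (rel_of [1,0,2,3,4])"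
    by code_simp
qed (auto simp: is_profile_def)

lemma MS_nonmono: "\<not> ballot_monotone (scoring_rule (cost_MS :: nat cost))"
proof (rule nonmono_crit[where C="{0..4}" and P="[{0,1,2},{0,3,4},{1,2,3,4::nat}]" and i=2
      and xs="[1,0,2,3,4]" and zs="[1,2,0,3,4]"])
  show "\<not> is_interval (rel_of [1,0,2,3,4::nat]) ([{0,1,2},{0,3,4},{1,2,3,4::nat}] ! 2)"
    by (rule niw[where a=1 and b=2 and c=0]; code_simp)
  show "\<forall>ys\<in>permutations_of_set {0..4}. total_cost cost_MS {0..4} [{0,1,2},{0,3,4},{1,2,3,4::nat}] (rel_of [1,0,2,3,4])
     \<le> total_cost cost_MS {0..4} [{0,1,2},{0,3,4},{1,2,3,4::nat}] (rel_of ys)"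
    by code_simp
  show "total_cost cost_MS {0..4} ([{0,1,2},{0,3,4},{1,2,3,4::nat}][2 := interval_hull {0..4} (rel_of [1,0,2,3,4]) ([{0,1,2},{0,3,4},{1,2,3,4::nat}]!2)]) (rel_of [1,2,0,3,4])
    < total_cost cost_MS {0..4} ([{0,1,2},{0,3,4},{1,2,3,4::nat}][2 := interval_hull {0..4} (rel_of [1,0,2,3,4]) ([{0,1,2},{0,3,4},{1,2,3,4::nat}]!2)]) (rel_of [1,0,2,3,4])"
    by code_simp
qed (auto simp: is_profile_def)

theorem mainTheorem6:
  shows "ballot_monotone (scoring_rule (cost_VD :: 'a cost))
       \<and> ballot_monotone (scoring_rule (cost_BC :: 'a cost))
       \<and> \<not> ballot_monotone (scoring_rule (cost_MF :: nat cost))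
       \<and> \<not> ballot_monotone (scoring_rule (cost_MS :: nat cost))
       \<and> \<not> ballot_monotone (scoring_rule (cost_FT :: nat cost))"
  using VD_mono BC_mono MF_nonmono MS_nonmono FT_nonmono by blast

end
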